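(* There exists an independence system that is nearly finitary but is not $k$-nearly finitary for any $k\in\mathbb{N}$.
   Context: An independence system is a pair $I=(E,\mathcal{L})$ with $\mathcal{L}\subseteq 2^E$, $\emptyset\in\mathcal{L}$, and $\mathcal{L}$ closed under taking subsets. Its bases are the inclusion-maximal elements of $\mathcal{L}$. Its finitarization is $I^{\mathrm{fin}}=(E,\mathcal{L}^{\mathrm{fin}})$ where $\mathcal{L}^{\mathrm{fin}}$ consists of the sets all of whose finite subsets lie in $\mathcal{L}$. $I$ is nearly finitary if whenever a base $F$ of $I^{\mathrm{fin}}$ contains a base $B$ of $I$, the set $F\setminus B$ is finite; $I$ is $k$-nearly finitary if $|F\setminus B|\le k$ for every such pair. *)

theory Defs
  imports Main
begin

definition indep_system :: "'a set \<Rightarrow> 'a set set \<Rightarrow> bool" where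
  "indep_system E L \<longleftrightarrow> L \<subseteq> Pow E \<and> {} \<in> L \<and> (\<forall>X\<in>L. \<forall>Y. Y \<subseteq> X \<longrightarrow> Y \<in> L)"

definition is_base :: "'a set set \<Rightarrow> 'a set \<Rightarrow> bool" where
  "is_base L B \<longleftrightarrow> B \<in> L \<and> (\<forall>X\<in>L. B \<subseteq> X \<longrightarrow> X = B)"

definition fin_closure :: "'a set \<Rightarrow> 'a set set \<Rightarrow> 'a set set" where
  "fin_closure E L = {X. X \<subseteq> E \<and> (\<forall>Y. Y \<subseteq> X \<and> finite Y \<longrightarrow> Y \<in> L)}"

definition nearly_finitary :: "'a set \<Rightarrow> 'a set set \<Rightarrow> bool" where
  "nearly_finitary E L \<longleftrightarrow>
     (\<forall>F B. is_base (fin_closure E L) F \<and> is_base L B \<and> B \<subseteq> F \<longrightarrow> finite (F - B))"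

definition k_nearly_finitary :: "nat \<Rightarrow> 'a set \<Rightarrow> 'a set set \<Rightarrow> bool" where
  "k_nearly_finitary k E L \<longleftrightarrow>
     (\<forall>F B. is_base (fin_closure E L) F \<and> is_base L B \<and> B \<subseteq> F \<longrightarrow>
        finite (F - B) \<and> card (F - B) \<le> k)"

end

theory Submission
  imports Defs
begin

definition CC :: "nat \<Rightarrow> nat set" where "CC k = {2^k..<2^(Suc k)}"

definition LL :: "nat set set" where "LL = {X. finite X \<or> (\<exists>k. X \<subseteq> - CC k)}"

lemma CC_fin: "finite (CC k)" by (simp add: CC_def)

lemma CC_card: "card (CC k) > k"
proof -
  have "card (CC k) = 2^k" by (simp add: CC_def)
  moreover have "k < 2^k" by (rule less_exp)
  ultimately show ?thesis by simp
qed

lemma CC_mem: "(2::nat)^k \<in> CC k" by (simp add: CC_def)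

lemma CC_disj: assumes "x \<in> CC k" "x \<in> CC j" shows "k = j"
proof -
  from assms have a: "(2::nat)^k < 2^(Suc j)" "(2::nat)^j < 2^(Suc k)" by (auto simp: CC_def)
  have "k < Suc j" using power_strict_increasing_iff[of "2::nat" k "Suc j"] a(1) by linarith
  moreover have "j < Suc k" using power_strict_increasing_iff[of "2::nat" j "Suc k"] a(2) by linarith
  ultimately show ?thesis by simp
qed

lemma compl_inf: "infinite (- CC k)"
  using CC_fin finite_compl by blast

lemma fc: "fin_closure UNIV LL = UNIV"
  by (auto simp: fin_closure_def LL_def)

lemma baseF: "is_base (fin_closure UNIV LL) F \<Longrightarrow> F = UNIV"
  by (auto simp: is_base_def fc)

lemma baseB: assumes "is_base LL B" shows "\<exists>k. B = - CC k"
proof -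
  have B: "B \<in> LL" and mx: "\<And>X. X \<in> LL \<Longrightarrow> B \<subseteq> X \<Longrightarrow> X = B"
    using assms by (auto simp: is_base_def)
  show ?thesis
  proof (cases "finite B")
    case True
    then obtain x :: nat where "x \<notin> B" using ex_new_if_finite[OF infinite_UNIV_nat True] by blast
    moreover have "insert x B \<in> LL" using True by (simp add: LL_def)
    ultimately show ?thesis using mx[of "insert x B"] by auto
  next
    case False
    then obtain k where "B \<subseteq> - CC k" using B by (auto simp: LL_def)
    moreover have "- CC k \<in> LL" by (auto simp: LL_def)
    ultimately show ?thesis using mx by blast
  qed
qed

lemma baseC: "is_base LL (- CC j)"
  unfolding is_base_def
proof (intro conjI ballI impI)
  show "- CC j \<in> LL" by (auto simp: LL_def)
  fix X assume X: "X \<in> LL" "- CC j \<subseteq> X"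
  have "infinite X" using X(2) compl_inf finite_subset by blast
  then obtain m where m: "X \<subseteq> - CC m" using X(1) by (auto simp: LL_def)
  have "2^m \<notin> - CC j" using m X(2) CC_mem[of m] by blast
  then have "m = j" using CC_disj[of "2^m" m j] CC_mem[of m] by blast
  then show "X = - CC j" using m X(2) by blast
qed

theorem theorem4p2p1:
  shows "\<exists>(E :: nat set) (L :: nat set set). indep_system E L \<and> nearly_finitary E L \<and>
           (\<forall>k. \<not> k_nearly_finitary k E L)"
proof (intro exI conjI allI)
  show "indep_system UNIV LL"
    unfolding indep_system_def LL_def
  proof (intro conjI ballI allI impI)
    fix X Y assume X: "X \<in> {X. finite X \<or> (\<exists>k. X \<subseteq> - CC k)}" and Y: "Y \<subseteq> X"
    show "Y \<in> {X. finite X \<or> (\<exists>k. X \<subseteq> - CC k)}"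
    proof (cases "finite X")
      case True then show ?thesis using Y finite_subset by blast
    next
      case False then obtain k where "X \<subseteq> - CC k" using X by blast
      then show ?thesis using Y by blast
    qed
  qed auto
  show "nearly_finitary UNIV LL"
    unfolding nearly_finitary_def
  proof (intro allI impI)
    fix F B assume "is_base (fin_closure UNIV LL) F \<and> is_base LL B \<and> B \<subseteq> F"
    then have "F = UNIV" "\<exists>k. B = - CC k" using baseF baseB by auto
    then show "finite (F - B)" using CC_fin by auto
  qed
  fix k
  show "\<not> k_nearly_finitary k UNIV LL"
  proof
    assume "k_nearly_finitary k UNIV LL"
    moreover have "is_base (fin_closure UNIV LL) UNIV" by (auto simp add: is_base_def fc)
    ultimately have "card (UNIV - (- CC k)) \<le> k" using baseC[of k]
      unfolding k_nearly_finitary_def by blast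
    then show False using CC_card[of k] by simp
  qed
qed

end
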